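(* Under Assumptions A1–A3 (see context), with $\tilde{\bar\theta}_k=\theta-\bar\theta_k$, for every $k\ge0$: $$|\bar\psi_k|\ge\bar\beta_k|\phi_k^{\mathrm T}\tilde{\bar\theta}_k|\quad\text{and}\quad \phi_k^{\mathrm T}\tilde{\bar\theta}_k\,\bar\psi_k\ge0,$$ where $$\bar\psi_k=\mathbb E_k\{\operatorname{sgn}[y_{k+1}-S_k(\phi_k^{\mathrm T}\bar\theta_k)]\}+F_{k+1}(u_k-\phi_k^{\mathrm T}\bar\theta_k)\mathrm I_{[S_k(\phi_k^{\mathrm T}\bar\theta_k)=U_k]}-[1-F_{k+1}(l_k-\phi_k^{\mathrm T}\bar\theta_k)]\mathrm I_{[S_k(\phi_k^{\mathrm T}\bar\theta_k)=L_k]}.$$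
   Context: Setting. Let $\{\mathcal F_k\}_{k\ge0}$ be a nondecreasing sequence of $\sigma$-algebras and write $\mathbb E_k[\cdot]=\mathbb E[\cdot\mid\mathcal F_k]$. Observations follow the saturated model $y_{k+1}=S_k(\phi_k^{\mathrm T}\theta+\varepsilon_{k+1})$, $k=0,1,2,\dots$, where $\phi_k\in\mathbb R^d$ is $\mathcal F_k$-measurable, $\theta\in\mathbb R^d$ is unknown, $\varepsilon_{k+1}\in\mathbb R$ is noise ($\mathcal F_{k+1}$-measurable), and $S_k(x)=L_k$ if $x<l_k$, $S_k(x)=x$ if $l_k\le x\le u_k$, $S_k(x)=U_k$ if $x>u_k$. Assumption A1: $\{\phi_k\}$ is bounded in $k$, and $\theta$ is an interior point of a known convex compact set $D\subseteq\mathbb R^d$. Let $\{C_k\}$ be a bounded $\mathcal F_k$-adapted sequence with $\sup_{x\in D}|\phi_k^{\mathrm T}x|\le C_k$. Assumption A2: $l_k,u_k,L_k,U_k$ are known $\mathcal F_k$-measurable random variables with $L_k\le l_k\le u_k\le U_k$ a.s.; there is a constant $M$ with $\sup_{k\ge0}\max\{l_k,-u_k\}\le M<\infty$ a.s.; and $L_k=l_k=u_k=U_k$ does not hold a.s. The weights $b_k$ are known, $\mathcal F_k$-measurable, with $0<\inf_k b_k\le\sup_k b_k\le 1$. Assumption A3: the conditional distribution function $F_{k+1}$ of $\varepsilon_{k+1}$ given $\mathcal F_k$ satisfies $F_{k+1}(0)=1/2$; its conditional density $f_{k+1}$ is continuous and known; and there is a constant $C\ge\sup_k C_k$ with $0<\inf_{|x|\le\max\{2C,C+M\},k\ge0}f_{k+1}(x)\le\sup_{|x|\le\max\{2C,C+M\},k\ge0}f_{k+1}(x)<\infty$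 a.s. Projection: for positive definite $Q$, $\|x\|_Q^2=x^{\mathrm T}Qx$ and $\Pi_Q(x)=\arg\min_{y\in D}\|x-y\|_Q$. TSWLAD algorithm. Step 1: with $\bar\theta_0\in D$, $\bar P_0>0$, and an $\mathcal F_k$-adapted sequence $\bar\mu_k$ with $0<\inf\bar\mu_k\le\sup\bar\mu_k<\infty$, for $k\ge0$: $\bar\theta_{k+1}=\Pi_{\bar P_{k+1}^{-1}}\{\bar\theta_k+\bar a_k b_k\bar P_k\phi_k\bar v_{k+1}\}$, $\bar v_{k+1}=\operatorname{sgn}[y_{k+1}-S_k(\phi_k^{\mathrm T}\bar\theta_k)]+F_{k+1}(u_k-\phi_k^{\mathrm T}\bar\theta_k)\mathrm I_{[S_k(\phi_k^{\mathrm T}\bar\theta_k)=U_k]}-[1-F_{k+1}(l_k-\phi_k^{\mathrm T}\bar\theta_k)]\mathrm I_{[S_k(\phi_k^{\mathrm T}\bar\theta_k)=L_k]}$, $\bar P_{k+1}=\bar P_k-\bar a_k\bar\beta_k b_k^2\bar P_k\phi_k\phi_k^{\mathrm T}\bar P_k$, $\bar a_k=1/(\bar\mu_k+\bar\beta_k b_k^2\phi_k^{\mathrm T}\bar P_k\phi_k)$, $\bar\beta_k=\inf_{|x|\le\max\{2C_k,C_k+l_k,C_k-u_k\}}f_{k+1}(x)$. Step 2: with $\theta_0\in D$, $P_0>0$, and $\mu_k$ with $0<\inf\mu_k\le\sup\mu_k<\infty$, for $k\ge0$, letting $d_k=\phi_k^{\mathrm T}(\bar\theta_k-\theta_k)$: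 $\theta_{k+1}=\Pi_{P_{k+1}^{-1}}\{\theta_k+a_kb_kP_k\phi_kv_{k+1}\}$, $v_{k+1}=\operatorname{sgn}[y_{k+1}-S_k(\phi_k^{\mathrm T}\theta_k)]+F_{k+1}(u_k-\phi_k^{\mathrm T}\theta_k)\mathrm I_{[S_k(\phi_k^{\mathrm T}\theta_k)=U_k]}-[1-F_{k+1}(l_k-\phi_k^{\mathrm T}\theta_k)]\mathrm I_{[S_k(\phi_k^{\mathrm T}\theta_k)=L_k]}$, $P_{k+1}=P_k-a_k\beta_kb_k^2P_k\phi_k\phi_k^{\mathrm T}P_k$, $a_k=1/(\mu_k+\beta_kb_k^2\phi_k^{\mathrm T}P_k\phi_k)$, and $\beta_k=\frac{F_{k+1}(l_k-\phi_k^{\mathrm T}\theta_k)-F_{k+1}(l_k-\phi_k^{\mathrm T}\bar\theta_k)}{d_k}\mathrm I_{[d_k\ne0]}+f_{k+1}(l_k-\phi_k^{\mathrm T}\theta_k)\mathrm I_{[d_k=0]}$ if $S_k(\phi_k^{\mathrm T}\theta_k)=L_k$; $\beta_k=\frac{1-2F_{k+1}(\phi_k^{\mathrm T}\theta_k-\phi_k^{\mathrm T}\bar\theta_k)}{d_k}\mathrm I_{[d_k\ne0]}+2f_{k+1}(0)\mathrm I_{[d_k=0]}$ if $L_k<S_k(\phi_k^{\mathrm T}\theta_k)<U_k$; $\beta_k=\frac{F_{k+1}(u_k-\phi_k^{\mathrm T}\theta_k)-F_{k+1}(u_k-\phi_k^{\mathrm T}\bar\theta_k)}{d_k}\mathrm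 I_{[d_k\ne0]}+f_{k+1}(u_k-\phi_k^{\mathrm T}\theta_k)\mathrm I_{[d_k=0]}$ if $S_k(\phi_k^{\mathrm T}\theta_k)=U_k$. Here $\operatorname{sgn}$ is the sign function and $\mathrm I_{[\cdot]}$ the indicator. *)

theory Defs
  imports "HOL-Analysis.Analysis" "HOL-Probability.Probability"
begin

definition Sat :: "real \<Rightarrow> real \<Rightarrow> real \<Rightarrow> real \<Rightarrow> real \<Rightarrow> real" where
  "Sat Lo lo up Up x = (if x < lo then Lo else if x \<le> up then x else Up)"

definition Ind :: "bool \<Rightarrow> real" where
  "Ind P = (if P then 1 else 0)"

definition pos_def :: "real^'n^'n \<Rightarrow> bool" where
  "pos_def Q \<longleftrightarrow> transpose Q = Q \<and> (\<forall>x. x \<noteq> 0 \<longrightarrow> x \<bullet> (Q *v x) > 0)"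

definition qnorm :: "real^'n^'n \<Rightarrow> real^'n \<Rightarrow> real" where
  "qnorm Q x = sqrt (x \<bullet> (Q *v x))"

definition proj :: "(real^'n) set \<Rightarrow> real^'n^'n \<Rightarrow> real^'n \<Rightarrow> real^'n" where
  "proj D Q x = (SOME y. y \<in> D \<and> (\<forall>z\<in>D. qnorm Q (x - y) \<le> qnorm Q (x - z)))"

definition outer :: "real^'n \<Rightarrow> real^'n \<Rightarrow> real^'n^'n" where
  "outer x y = (\<chi> i j. x $ i * y $ j)"

definition betabar :: "(real \<Rightarrow> real) \<Rightarrow> real \<Rightarrow> real \<Rightarrow> real \<Rightarrow> real" where
  "betabar f Ck lk uk = Inf (f ` {x. \<bar>x\<bar> \<le> max (2 * Ck) (max (Ck + lk) (Ck - uk))})"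

end

theory Submission
  imports Defs
begin



lemma deriv_mono_nonneg:
  fixes F :: "real \<Rightarrow> real"
  assumes "mono F" "(F has_real_derivative d) (at x)"
  shows "0 \<le> d"
proof (rule ccontr)
  assume "\<not> 0 \<le> d"
  then obtain e where "e > 0" "\<forall>h>0. h < e \<longrightarrow> F x > F (x + h)"
    using DERIV_neg_dec_right[OF assms(2)] by force
  then have "F x > F (x + e/2)" by auto
  moreover have "F x \<le> F (x + e/2)" using assms(1) \<open>e > 0\<close> by (simp add: monoD)
  ultimately show False by simp
qed

lemma mvt_any:
  fixes F f :: "real \<Rightarrow> real"
  assumes "\<And>z. (F has_real_derivative f z) (at z)"
  shows "\<exists>z. min p q \<le> z \<and> z \<le> max p q \<and> F p - F q = f z * (p - q)"
proof (cases "p = q")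
  case True then show ?thesis by auto
next
  case False
  show ?thesis
  proof (cases "q < p")
    case True
    from MVT2[OF True, of F f] assms obtain z where "q < z" "z < p" "F p - F q = (p - q) * f z" by blast
    then show ?thesis using True by (intro exI[of _ z]) auto
  next
    case False
    then have "p < q" using \<open>p \<noteq> q\<close> by simp
    from MVT2[OF this, of F f] assms obtain z where "p < z" "z < q" "F q - F p = (q - p) * f z" by blast
    then show ?thesis using \<open>p < q\<close> by (intro exI[of _ z]) (auto simp: algebra_simps)
  qed
qed

lemma key_ineq:
  fixes F f :: "real \<Rightarrow> real"
  assumes "\<And>z. (F has_real_derivative f z) (at z)" "mono F"
    and "\<And>z. min p q \<le> z \<Longrightarrow> z \<le> max p q \<Longrightarrow> \<beta> \<le> f z"
  shows "\<beta> * \<bar>p - q\<bar> \<le> \<bar>F p - F q\<bar> \<and> 0 \<le> (p - q) * (F p - F q)"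
proof -
  obtain z where z: "min p q \<le> z" "z \<le> max p q" "F p - F q = f z * (p - q)"
    using mvt_any[OF assms(1)] by blast
  have f0: "0 \<le> f z" using deriv_mono_nonneg[OF assms(2) assms(1)] .
  have "\<beta> \<le> f z" using assms(3) z by auto
  then have "\<beta> * \<bar>p - q\<bar> \<le> f z * \<bar>p - q\<bar>" by (simp add: mult_right_mono)
  also have "\<dots> = \<bar>F p - F q\<bar>" using z(3) f0 by (simp add: abs_mult)
  finally show ?thesis using z(3) f0 by (simp add: mult.commute mult.left_commute)
qed

lemma betabar_le:
  assumes "\<And>z. 0 \<le> f z" "\<bar>z\<bar> \<le> max (2 * Ck) (max (Ck + lk) (Ck - uk))"
  shows "betabar f Ck lk uk \<le> f z"
  unfolding betabar_def
  by (rule cInf_lower) (use assms in \<open>auto intro: bdd_belowI2[where m=0]\<close>)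



lemma ind_above:
  fixes s :: "nat \<Rightarrow> real"
  assumes "s \<longlonglongrightarrow> t" "eventually (\<lambda>n. t \<le> s n) sequentially"
  shows "(\<lambda>n. if x \<le> s n then 1 else 0 :: real) \<longlonglongrightarrow> (if x \<le> t then 1 else 0)"
proof (cases "x \<le> t")
  case True
  have "eventually (\<lambda>n. (if x \<le> s n then 1 else 0 :: real) = 1) sequentially"
    using assms(2) by eventually_elim (use True in auto)
  then show ?thesis using True by (simp add: tendsto_eventually)
next
  case False
  have "eventually (\<lambda>n. s n < x) sequentially" using order_tendstoD(2)[OF assms(1)] False by simp
  then have "eventually (\<lambda>n. (if x \<le> s n then 1 else 0 :: real) = 0) sequentially"
    by eventually_elim auto
  then show ?thesis using False by (simp add: tendsto_eventually)
qed

lemma ind_below: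
  fixes s :: "nat \<Rightarrow> real"
  assumes "s \<longlonglongrightarrow> t" "\<And>n. s n < t"
  shows "(\<lambda>n. if x \<le> s n then 1 else 0 :: real) \<longlonglongrightarrow> (if x < t then 1 else 0)"
proof (cases "x < t")
  case True
  have "eventually (\<lambda>n. x < s n) sequentially" using order_tendstoD(1)[OF assms(1)] True by simp
  then have "eventually (\<lambda>n. (if x \<le> s n then 1 else 0 :: real) = 1) sequentially"
    by eventually_elim auto
  then show ?thesis using True by (simp add: tendsto_eventually)
next
  case False
  then have "\<And>n. (if x \<le> s n then 1 else 0 :: real) = 0" using assms(2) by (smt (verit))
  then show ?thesis using False by simp
qed

definition disc :: "nat \<Rightarrow> real \<Rightarrow> real" where
  "disc n y = real_of_int (max (-(int n * 2^n)) (min (int n * 2^n) \<lceil>2^n * y\<rceil>)) / 2^n"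

lemma disc_conv:
  "(\<lambda>n. disc n y) \<longlonglongrightarrow> y \<and> eventually (\<lambda>n. y \<le> disc n y) sequentially"
proof -
  obtain N :: nat where N: "\<bar>y\<bar> + 1 \<le> real N" using real_arch_simple by blast
  have ev: "y \<le> disc n y \<and> disc n y \<le> y + inverse (2^n)" if "N \<le> n" for n
  proof -
    define c where "c = \<lceil>(2::real)^n * y\<rceil>"
    have yn: "\<bar>y\<bar> + 1 \<le> real n" using N that by linarith
    have p: "(0::real) < 2^n" by simp
    have c1: "2^n * y \<le> of_int c" unfolding c_def by simp
    have c2: "of_int c < 2^n * y + 1" unfolding c_def by linarith
    have "- (real n * 2^n) \<le> 2^n * y"
    proof -
      have "- y \<le> real n" using yn by linarith
      then have "2^n * (- y) \<le> 2^n * real n" using p by (intro mult_left_mono) auto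
      then show ?thesis by (simp add: algebra_simps)
    qed
    then have "- (real n * 2^n) \<le> of_int c" using c1 by linarith
    then have "real_of_int (-(int n * 2^n)) \<le> real_of_int c" by simp
    then have lo: "-(int n * 2^n) \<le> c" unfolding of_int_le_iff .
    have "2^n * y + 1 \<le> real n * 2^n"
    proof -
      have a: "y + 1 \<le> real n" using yn by linarith
      have b: "2^n * (y+1) \<le> 2^n * real n" using a p by (intro mult_left_mono) auto
      have c: "(2::real)^n * (y+1) = 2^n * y + 2^n" by (simp add: distrib_left)
      have d: "(1::real) \<le> 2^n" by simp
      have e: "(2::real)^n * real n = real n * 2^n" by (rule mult.commute)
      have "2^n * y + 1 \<le> 2^n * y + (2::real)^n" using d by simp
      also have "\<dots> = 2^n * (y+1)" using c by simp
      also have "\<dots> \<le> 2^n * real n" by (rule b)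
      also have "\<dots> = real n * 2^n" by (rule e)
      finally show ?thesis .
    qed
    then have "of_int c \<le> real n * 2^n" using c2 by linarith
    then have "real_of_int c \<le> real_of_int (int n * 2^n)" by simp
    then have hi: "c \<le> int n * 2^n" unfolding of_int_le_iff .
    have d: "disc n y = of_int c / 2^n" unfolding disc_def c_def[symmetric] using lo hi by simp
    have "y \<le> of_int c / 2^n" using c1 p by (simp add: field_simps)
    moreover have "of_int c / 2^n \<le> y + inverse (2^n)" using c2 p by (simp add: field_simps)
    ultimately show ?thesis using d by simp
  qed
  have evs: "eventually (\<lambda>n. y \<le> disc n y \<and> disc n y \<le> y + inverse (2^n)) sequentially"
    unfolding eventually_sequentially using ev by blast
  have e1: "eventually (\<lambda>n. y \<le> disc n y) sequentially"
    using evs by (rule eventually_mono) (rule conjunct1)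
  have e2: "eventually (\<lambda>n. disc n y \<le> y + inverse (2^n)) sequentially"
    using evs by (rule eventually_mono) (rule conjunct2)
  have "(\<lambda>n. y + inverse ((2::real)^n)) \<longlonglongrightarrow> y + 0"
    by (intro tendsto_add tendsto_const LIMSEQ_inverse_realpow_zero) simp
  then have l: "(\<lambda>n. y + inverse ((2::real)^n)) \<longlonglongrightarrow> y" by simp
  have "(\<lambda>n. disc n y) \<longlonglongrightarrow> y"
    by (rule tendsto_sandwich[OF e1 e2 tendsto_const l])
  then show ?thesis using e1 by blast
qed

lemma disc_meas: assumes [measurable]: "g \<in> borel_measurable N" shows "(\<lambda>\<omega>. disc n (g \<omega>)) \<in> borel_measurable N"
  unfolding disc_def by measurable

lemma disc_vals: "disc n y \<in> (\<lambda>j. real_of_int j / 2^n) ` {-(int n * 2^n)..int n * 2^n}"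
  unfolding disc_def by (rule imageI) auto



locale cdfloc = prob_space M for M :: "'a measure" +
  fixes G :: "'a measure" and e :: "'a \<Rightarrow> real" and Fd :: "'a \<Rightarrow> real \<Rightarrow> real"
  assumes subG: "subalgebra M G"
  and e_meas[measurable]: "e \<in> borel_measurable M"
  and Fd_meas: "\<And>x. (\<lambda>\<omega>. Fd \<omega> x) \<in> borel_measurable G"
  and Fd_cond: "\<And>x. AE \<omega> in M. Fd \<omega> x = real_cond_exp M G (indicator {\<omega>'\<in>space M. e \<omega>' \<le> x}) \<omega>"
  and Fd_cont: "\<And>\<omega> x. \<omega> \<in> space M \<Longrightarrow> isCont (Fd \<omega>) x"
  and Fd_01: "\<And>\<omega> x. \<omega> \<in> space M \<Longrightarrow> 0 \<le> Fd \<omega> x \<and> Fd \<omega> x \<le> 1"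

sublocale cdfloc \<subseteq> S: sigma_finite_subalgebra M G
proof -
  have "finite_measure_subalgebra M G"
    by (simp add: finite_measure_subalgebra_def finite_measure_subalgebra_axioms_def subG finite_measure_axioms)
  then show "sigma_finite_subalgebra M G" by (rule finite_measure_subalgebra_is_sigma_finite)
qed

context cdfloc begin

lemma spG: "space G = space M" using subG by (simp add: subalgebra_def)
lemma GM: "f \<in> borel_measurable G \<Longrightarrow> f \<in> borel_measurable M"
  using measurable_from_subalg[OF subG] by blast
lemma setsG: "A \<in> sets G \<Longrightarrow> A \<in> sets M" using subG by (auto simp: subalgebra_def)

lemma Ile_meas: assumes [measurable]: "h \<in> borel_measurable M" shows
   "(indicator {\<omega>\<in>space M. e \<omega> \<le> h \<omega>} :: 'a \<Rightarrow> real) \<in> borel_measurable M"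
  by measurable

lemma Ilt_meas: assumes [measurable]: "h \<in> borel_measurable M" shows
   "(indicator {\<omega>\<in>space M. e \<omega> < h \<omega>} :: 'a \<Rightarrow> real) \<in> borel_measurable M"
  by measurable

lemma bnd_int: "(f :: 'a \<Rightarrow> real) \<in> borel_measurable M \<Longrightarrow> (\<And>\<omega>. \<omega> \<in> space M \<Longrightarrow> \<bar>f \<omega>\<bar> \<le> B) \<Longrightarrow> integrable M f"
  by (rule integrable_const_bound[where B=B]) auto

lemma Ind_int: "h \<in> borel_measurable M \<Longrightarrow>
   integrable M (indicator {\<omega>\<in>space M. e \<omega> \<le> h \<omega>} :: 'a \<Rightarrow> real)"
  by (rule bnd_int[where B=1], erule Ile_meas) (auto simp: indicator_def)

lemma SI_of_CE:
  assumes "AE \<omega> in M. real_cond_exp M G f \<omega> = u \<omega>" "integrable M f" "A \<in> sets G"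
    and [measurable]: "u \<in> borel_measurable M"
  shows "(\<integral>\<omega>\<in>A. f \<omega> \<partial>M) = (\<integral>\<omega>\<in>A. u \<omega> \<partial>M)"
proof -
  have [measurable]: "A \<in> sets M" using setsG assms(3) by blast
  have "(\<integral>\<omega>\<in>A. f \<omega> \<partial>M) = (\<integral>\<omega>\<in>A. real_cond_exp M G f \<omega> \<partial>M)"
    by (rule S.real_cond_exp_intA[OF assms(2,3)])
  also have "\<dots> = (\<integral>\<omega>\<in>A. u \<omega> \<partial>M)"
    unfolding set_lebesgue_integral_def
    by (rule integral_cong_AE) (use assms(1) in auto)
  finally show ?thesis .
qed

lemma fin_case:
  assumes hG[measurable]: "h \<in> borel_measurable G" and V: "finite V" "\<And>\<omega>. \<omega>\<in>space M \<Longrightarrow> h \<omega> \<in> V"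
  shows "(\<lambda>\<omega>. Fd \<omega> (h \<omega>)) \<in> borel_measurable G"
   and "AE \<omega> in M. real_cond_exp M G (indicator {\<omega>\<in>space M. e \<omega> \<le> h \<omega>}) \<omega> = Fd \<omega> (h \<omega>)"
proof -
  define I where "I c = (indicator {\<omega>\<in>space M. h \<omega> = c} :: 'a \<Rightarrow> real)" for c
  define X where "X c = (indicator {\<omega>\<in>space M. e \<omega> \<le> c} :: 'a \<Rightarrow> real)" for c
  have IG[measurable]: "I c \<in> borel_measurable G" for c
  proof -
    have "{\<omega>\<in>space G. h \<omega> = c} \<in> sets G" by measurable
    then show ?thesis unfolding I_def spG[symmetric] by (rule borel_measurable_indicator)
  qed
  have IM[measurable]: "I c \<in> borel_measurable M" for c using GM[OF IG] .
  have XM[measurable]: "X c \<in> borel_measurable M" for c unfolding X_def by measurable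
  have FdG[measurable]: "(\<lambda>\<omega>. Fd \<omega> c) \<in> borel_measurable G" for c by (rule Fd_meas)
  have sumFd: "Fd \<omega> (h \<omega>) = (\<Sum>c\<in>V. I c \<omega> * Fd \<omega> c)" if "\<omega> \<in> space M" for \<omega>
  proof -
    have "(\<Sum>c\<in>V. I c \<omega> * Fd \<omega> c) = (\<Sum>c\<in>V. if h \<omega> = c then Fd \<omega> c else 0)"
      by (rule sum.cong) (auto simp: I_def that)
    also have "\<dots> = Fd \<omega> (h \<omega>)" using V that by (simp add: sum.delta)
    finally show ?thesis by simp
  qed
  have "(\<lambda>\<omega>. \<Sum>c\<in>V. I c \<omega> * Fd \<omega> c) \<in> borel_measurable G" by measurable
  then show meas: "(\<lambda>\<omega>. Fd \<omega> (h \<omega>)) \<in> borel_measurable G"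
    by (rule measurable_cong[THEN iffD1, rotated]) (simp add: spG sumFd)
  have sumI: "indicator {\<omega>\<in>space M. e \<omega> \<le> h \<omega>} = (\<lambda>\<omega>. \<Sum>c\<in>V. I c \<omega> * X c \<omega>)"
  proof
    fix \<omega>
    show "indicator {\<omega>\<in>space M. e \<omega> \<le> h \<omega>} \<omega> = (\<Sum>c\<in>V. I c \<omega> * X c \<omega>)"
    proof (cases "\<omega> \<in> space M")
      case True
      have "(\<Sum>c\<in>V. I c \<omega> * X c \<omega>) = (\<Sum>c\<in>V. if h \<omega> = c then X c \<omega> else 0)"
        by (rule sum.cong) (auto simp: I_def True)
      also have "\<dots> = X (h \<omega>) \<omega>" using V True by (simp add: sum.delta)
      finally show ?thesis by (simp add: X_def indicator_def True)
    qed (simp add: I_def)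
  qed
  have intIX: "integrable M (\<lambda>\<omega>. I c \<omega> * X c \<omega>)" for c
    by (rule bnd_int[where B=1], measurable) (auto simp: I_def X_def indicator_def)
  have intX: "integrable M (X c)" for c
    by (rule bnd_int[where B=1], measurable) (auto simp: X_def indicator_def)
  have A1: "AE \<omega> in M. real_cond_exp M G (\<lambda>\<omega>. \<Sum>c\<in>V. I c \<omega> * X c \<omega>) \<omega>
      = (\<Sum>c\<in>V. real_cond_exp M G (\<lambda>\<omega>. I c \<omega> * X c \<omega>) \<omega>)"
    by (rule S.real_cond_exp_sum) (rule intIX)
  have A2: "AE \<omega> in M. \<forall>c\<in>V. real_cond_exp M G (\<lambda>\<omega>. I c \<omega> * X c \<omega>) \<omega> = I c \<omega> * real_cond_exp M G (X c) \<omega>"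
    by (rule AE_finite_allI[OF V(1)]) (rule S.real_cond_exp_mult[OF IG XM intIX])
  have A3: "AE \<omega> in M. \<forall>c\<in>V. Fd \<omega> c = real_cond_exp M G (X c) \<omega>"
    by (rule AE_finite_allI[OF V(1)]) (unfold X_def, rule Fd_cond)
  show "AE \<omega> in M. real_cond_exp M G (indicator {\<omega>\<in>space M. e \<omega> \<le> h \<omega>}) \<omega> = Fd \<omega> (h \<omega>)"
    unfolding sumI using A1 A2 A3 AE_space
  proof (eventually_elim)
    case (elim \<omega>)
    have "(\<Sum>c\<in>V. real_cond_exp M G (\<lambda>\<omega>. I c \<omega> * X c \<omega>) \<omega>) = (\<Sum>c\<in>V. I c \<omega> * Fd \<omega> c)"
      by (rule sum.cong) (use elim in auto)
    then show ?case using elim(1) sumFd[OF elim(4)] by simp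
  qed
qed

end


context cdfloc begin

lemma lim_step:
  fixes s :: "nat \<Rightarrow> 'a \<Rightarrow> real" and t f :: "'a \<Rightarrow> real"
  assumes sG: "\<And>n. s n \<in> borel_measurable G"
   and FsG: "\<And>n. (\<lambda>\<omega>. Fd \<omega> (s n \<omega>)) \<in> borel_measurable G"
   and st: "\<And>\<omega>. \<omega> \<in> space M \<Longrightarrow> (\<lambda>n. s n \<omega>) \<longlonglongrightarrow> t \<omega>"
   and fM[measurable]: "f \<in> borel_measurable M"
   and If: "\<And>\<omega>. \<omega> \<in> space M \<Longrightarrow> (\<lambda>n. indicator {\<omega>\<in>space M. e \<omega> \<le> s n \<omega>} \<omega> :: real) \<longlonglongrightarrow> f \<omega>"
   and SI: "\<And>n A. A \<in> sets G \<Longrightarrow> (\<integral>\<omega>\<in>A. indicator {\<omega>\<in>space M. e \<omega> \<le> s n \<omega>} \<omega> \<partial>M) = (\<integral>\<omega>\<in>A. Fd \<omega> (s n \<omega>) \<partial>M)"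
  shows "(\<lambda>\<omega>. Fd \<omega> (t \<omega>)) \<in> borel_measurable G"
    and "\<And>A. A \<in> sets G \<Longrightarrow> (\<integral>\<omega>\<in>A. f \<omega> \<partial>M) = (\<integral>\<omega>\<in>A. Fd \<omega> (t \<omega>) \<partial>M)"
proof -
  have conv: "(\<lambda>n. Fd \<omega> (s n \<omega>)) \<longlonglongrightarrow> Fd \<omega> (t \<omega>)" if "\<omega> \<in> space M" for \<omega>
    by (rule isCont_tendsto_compose[OF Fd_cont[OF that] st[OF that]])
  show measG: "(\<lambda>\<omega>. Fd \<omega> (t \<omega>)) \<in> borel_measurable G"
    by (rule borel_measurable_LIMSEQ_real[where u="\<lambda>n \<omega>. Fd \<omega> (s n \<omega>)"]) (use conv FsG spG in auto)
  have sM[measurable]: "s n \<in> borel_measurable M" for n using GM[OF sG] .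
  have FsM[measurable]: "(\<lambda>\<omega>. Fd \<omega> (s n \<omega>)) \<in> borel_measurable M" for n using GM[OF FsG] .
  have FtM[measurable]: "(\<lambda>\<omega>. Fd \<omega> (t \<omega>)) \<in> borel_measurable M" using GM[OF measG] .
  fix A assume AG: "A \<in> sets G"
  then have AM[measurable]: "A \<in> sets M" by (rule setsG)
  have L1: "(\<lambda>n. \<integral>\<omega>. indicator A \<omega> *\<^sub>R (indicator {\<omega>\<in>space M. e \<omega> \<le> s n \<omega>} \<omega> :: real) \<partial>M)
      \<longlonglongrightarrow> (\<integral>\<omega>. indicator A \<omega> *\<^sub>R f \<omega> \<partial>M)"
  proof (rule integral_dominated_convergence[where w="\<lambda>_. 1"])
    show "AE \<omega> in M. (\<lambda>n. indicator A \<omega> *\<^sub>R (indicator {\<omega>\<in>space M. e \<omega> \<le> s n \<omega>} \<omega> :: real))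
        \<longlonglongrightarrow> indicator A \<omega> *\<^sub>R f \<omega>"
      by (rule AE_I2) (intro tendsto_scaleR tendsto_const If)
    show "\<And>n. AE \<omega> in M. norm (indicator A \<omega> *\<^sub>R (indicator {\<omega>\<in>space M. e \<omega> \<le> s n \<omega>} \<omega> :: real)) \<le> 1"
      by (rule AE_I2) (auto simp: indicator_def)
  qed measurable
  have L2: "(\<lambda>n. \<integral>\<omega>. indicator A \<omega> *\<^sub>R Fd \<omega> (s n \<omega>) \<partial>M)
      \<longlonglongrightarrow> (\<integral>\<omega>. indicator A \<omega> *\<^sub>R Fd \<omega> (t \<omega>) \<partial>M)"
  proof (rule integral_dominated_convergence[where w="\<lambda>_. 1"])
    show "AE \<omega> in M. (\<lambda>n. indicator A \<omega> *\<^sub>R Fd \<omega> (s n \<omega>)) \<longlonglongrightarrow> indicator A \<omega> *\<^sub>R Fd \<omega> (t \<omega>)"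
      by (rule AE_I2) (intro tendsto_scaleR tendsto_const conv)
    show "\<And>n. AE \<omega> in M. norm (indicator A \<omega> *\<^sub>R Fd \<omega> (s n \<omega>)) \<le> 1"
      by (rule AE_I2) (use Fd_01 in \<open>auto simp: indicator_def\<close>)
  qed measurable
  have "(\<lambda>n. \<integral>\<omega>. indicator A \<omega> *\<^sub>R (indicator {\<omega>\<in>space M. e \<omega> \<le> s n \<omega>} \<omega> :: real) \<partial>M)
      = (\<lambda>n. \<integral>\<omega>. indicator A \<omega> *\<^sub>R Fd \<omega> (s n \<omega>) \<partial>M)"
    using SI[OF AG] unfolding set_lebesgue_integral_def by simp
  with L1 L2 show "(\<integral>\<omega>\<in>A. f \<omega> \<partial>M) = (\<integral>\<omega>\<in>A. Fd \<omega> (t \<omega>) \<partial>M)"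
    unfolding set_lebesgue_integral_def using LIMSEQ_unique by metis
qed

end


context cdfloc begin

lemma le_SI:
  assumes gG[measurable]: "g \<in> borel_measurable G"
  shows "(\<lambda>\<omega>. Fd \<omega> (g \<omega>)) \<in> borel_measurable G"
    and "\<And>A. A \<in> sets G \<Longrightarrow> (\<integral>\<omega>\<in>A. indicator {\<omega>\<in>space M. e \<omega> \<le> g \<omega>} \<omega> \<partial>M) = (\<integral>\<omega>\<in>A. Fd \<omega> (g \<omega>) \<partial>M)"
proof -
  have gM[measurable]: "g \<in> borel_measurable M" using GM[OF gG] .
  define s where "s n \<omega> = disc n (g \<omega>)" for n \<omega>
  have sG: "s n \<in> borel_measurable G" for n unfolding s_def by (rule disc_meas[OF gG])
  have fc: "(\<lambda>\<omega>. Fd \<omega> (s n \<omega>)) \<in> borel_measurable G"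
     "AE \<omega> in M. real_cond_exp M G (indicator {\<omega>\<in>space M. e \<omega> \<le> s n \<omega>}) \<omega> = Fd \<omega> (s n \<omega>)" for n
    by (rule fin_case[OF sG, of "(\<lambda>j. real_of_int j / 2^n) ` {-(int n * 2^n)..int n * 2^n}"];
        simp add: s_def disc_vals)+
  have SI: "(\<integral>\<omega>\<in>A. indicator {\<omega>\<in>space M. e \<omega> \<le> s n \<omega>} \<omega> \<partial>M) = (\<integral>\<omega>\<in>A. Fd \<omega> (s n \<omega>) \<partial>M)"
    if "A \<in> sets G" for n A
    by (rule SI_of_CE[OF fc(2) Ind_int[OF GM[OF sG]] that GM[OF fc(1)]])
  have st: "(\<lambda>n. s n \<omega>) \<longlonglongrightarrow> g \<omega>" for \<omega> unfolding s_def using disc_conv by blast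
  have If: "(\<lambda>n. indicator {\<omega>\<in>space M. e \<omega> \<le> s n \<omega>} \<omega> :: real) \<longlonglongrightarrow> indicator {\<omega>\<in>space M. e \<omega> \<le> g \<omega>} \<omega>"
    if "\<omega> \<in> space M" for \<omega>
  proof -
    have "(\<lambda>n. if e \<omega> \<le> s n \<omega> then 1 else 0 :: real) \<longlonglongrightarrow> (if e \<omega> \<le> g \<omega> then 1 else 0)"
      using ind_above[of "\<lambda>n. s n \<omega>" "g \<omega>" "e \<omega>"] disc_conv[of "g \<omega>"] by (simp add: s_def)
    moreover have "(\<lambda>n. indicator {\<omega>\<in>space M. e \<omega> \<le> s n \<omega>} \<omega> :: real) = (\<lambda>n. if e \<omega> \<le> s n \<omega> then 1 else 0)"
      using that by (auto simp: indicator_def)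
    moreover have "(indicator {\<omega>\<in>space M. e \<omega> \<le> g \<omega>} \<omega> :: real) = (if e \<omega> \<le> g \<omega> then 1 else 0)"
      using that by (auto simp: indicator_def)
    ultimately show ?thesis by simp
  qed
  have fM: "(indicator {\<omega>\<in>space M. e \<omega> \<le> g \<omega>} :: 'a \<Rightarrow> real) \<in> borel_measurable M" by measurable
  show "(\<lambda>\<omega>. Fd \<omega> (g \<omega>)) \<in> borel_measurable G"
    by (rule lim_step(1)[OF sG fc(1) st fM If SI])
  show "\<And>A. A \<in> sets G \<Longrightarrow> (\<integral>\<omega>\<in>A. indicator {\<omega>\<in>space M. e \<omega> \<le> g \<omega>} \<omega> \<partial>M) = (\<integral>\<omega>\<in>A. Fd \<omega> (g \<omega>) \<partial>M)"
    by (rule lim_step(2)[OF sG fc(1) st fM If SI])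
qed

lemma lt_SI:
  assumes gG[measurable]: "g \<in> borel_measurable G"
  shows "\<And>A. A \<in> sets G \<Longrightarrow> (\<integral>\<omega>\<in>A. indicator {\<omega>\<in>space M. e \<omega> < g \<omega>} \<omega> \<partial>M) = (\<integral>\<omega>\<in>A. Fd \<omega> (g \<omega>) \<partial>M)"
proof -
  have gM[measurable]: "g \<in> borel_measurable M" using GM[OF gG] .
  define s where "s n \<omega> = g \<omega> - inverse (real (Suc n))" for n \<omega>
  have sG: "s n \<in> borel_measurable G" for n unfolding s_def by measurable
  have st: "(\<lambda>n. s n \<omega>) \<longlonglongrightarrow> g \<omega>" for \<omega>
  proof -
    have "(\<lambda>n. g \<omega> - inverse (real (Suc n))) \<longlonglongrightarrow> g \<omega> - 0"
      by (intro tendsto_diff tendsto_const LIMSEQ_inverse_real_of_nat)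
    then show ?thesis by (simp add: s_def)
  qed
  have If: "(\<lambda>n. indicator {\<omega>\<in>space M. e \<omega> \<le> s n \<omega>} \<omega> :: real) \<longlonglongrightarrow> indicator {\<omega>\<in>space M. e \<omega> < g \<omega>} \<omega>"
    if "\<omega> \<in> space M" for \<omega>
  proof -
    have "s n \<omega> < g \<omega>" for n by (simp add: s_def)
    then have "(\<lambda>n. if e \<omega> \<le> s n \<omega> then 1 else 0 :: real) \<longlonglongrightarrow> (if e \<omega> < g \<omega> then 1 else 0)"
      using ind_below[of "\<lambda>n. s n \<omega>" "g \<omega>" "e \<omega>"] st[of \<omega>] by blast
    moreover have "(\<lambda>n. indicator {\<omega>\<in>space M. e \<omega> \<le> s n \<omega>} \<omega> :: real) = (\<lambda>n. if e \<omega> \<le> s n \<omega> then 1 else 0)"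
      using that by (auto simp: indicator_def)
    moreover have "(indicator {\<omega>\<in>space M. e \<omega> < g \<omega>} \<omega> :: real) = (if e \<omega> < g \<omega> then 1 else 0)"
      using that by (auto simp: indicator_def)
    ultimately show ?thesis by simp
  qed
  have fM: "(indicator {\<omega>\<in>space M. e \<omega> < g \<omega>} :: 'a \<Rightarrow> real) \<in> borel_measurable M" by measurable
  show "\<And>A. A \<in> sets G \<Longrightarrow> (\<integral>\<omega>\<in>A. indicator {\<omega>\<in>space M. e \<omega> < g \<omega>} \<omega> \<partial>M) = (\<integral>\<omega>\<in>A. Fd \<omega> (g \<omega>) \<partial>M)"
    by (rule lim_step(2)[OF sG le_SI(1)[OF sG] st fM If le_SI(2)[OF sG]])
qed

lemma FdG_int:
  assumes gG[measurable]: "g \<in> borel_measurable G"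
  shows "integrable M (\<lambda>\<omega>. Fd \<omega> (g \<omega>))"
  by (rule bnd_int[where B=1], rule GM[OF le_SI(1)[OF gG]]) (use Fd_01 in auto)

lemma CE_le:
  assumes gG[measurable]: "g \<in> borel_measurable G"
  shows "AE \<omega> in M. real_cond_exp M G (indicator {\<omega>\<in>space M. e \<omega> \<le> g \<omega>}) \<omega> = Fd \<omega> (g \<omega>)"
  by (rule S.real_cond_exp_charact[OF le_SI(2)[OF gG] Ind_int[OF GM[OF gG]] FdG_int[OF gG] le_SI(1)[OF gG]])

lemma CE_lt:
  assumes gG[measurable]: "g \<in> borel_measurable G"
  shows "AE \<omega> in M. real_cond_exp M G (indicator {\<omega>\<in>space M. e \<omega> < g \<omega>}) \<omega> = Fd \<omega> (g \<omega>)"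
proof -
  have int: "integrable M (indicator {\<omega>\<in>space M. e \<omega> < g \<omega>} :: 'a \<Rightarrow> real)"
    by (rule bnd_int[where B=1], rule Ilt_meas[OF GM[OF gG]]) (auto simp: indicator_def)
  show ?thesis
    by (rule S.real_cond_exp_charact[OF lt_SI[OF gG] int FdG_int[OF gG] le_SI(1)[OF gG]])
qed

end



lemma sat_bounds:
  fixes L l u U a z :: real
  assumes o: "L \<le> l" "l \<le> u" "u \<le> U" and nd: "\<not> (L = l \<and> l = u \<and> u = U)"
  defines "s \<equiv> Sat L l u U a"
  defines "T \<equiv> (if s = U then u else if s = L then l else a)"
  defines "c0 \<equiv> (if s = U then 0 else 1 :: real)"
  defines "m \<equiv> (if s \<noteq> U \<and> s \<noteq> L then 1 else 0 :: real)"
  shows "c0 - (if z \<le> T then 1 else 0) - m * (if z < T then 1 else 0) \<le> sgn (Sat L l u U z - s)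
     \<and> sgn (Sat L l u U z - s) \<le> c0 - m * (if z \<le> T then 1 else 0) - (if z < T then 1 else 0)"
  using o nd unfolding s_def T_def c0_def m_def Sat_def
  by (auto simp: sgn_if split: if_splits)

lemma final_pw:
  fixes F f :: "real \<Rightarrow> real"
  assumes o: "L \<le> l" "l \<le> u" "u \<le> U" and nd: "\<not> (L = l \<and> l = u \<and> u = U)"
    and der: "\<And>z. (F has_real_derivative f z) (at z)" and mo: "mono F" and half: "F 0 = 1/2"
    and beta: "\<And>z. \<bar>z\<bar> \<le> max (2*C) (max (C + l) (C - u)) \<Longrightarrow> \<beta> \<le> f z"
    and xC: "\<bar>x\<bar> \<le> C" and aC: "\<bar>a\<bar> \<le> C"
  defines "s \<equiv> Sat L l u U a"
  defines "T \<equiv> (if s = U then u else if s = L then l else a)"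
  defines "c0 \<equiv> (if s = U then 0 else 1 :: real)"
  defines "m \<equiv> (if s \<noteq> U \<and> s \<noteq> L then 1 else 0 :: real)"
  shows "\<beta> * \<bar>x - a\<bar> \<le> \<bar>c0 - F (T - x) - m * F (T - x) + F (u - a) * Ind (s = U) - (1 - F (l - a)) * Ind (s = L)\<bar>
     \<and> 0 \<le> (x - a) * (c0 - F (T - x) - m * F (T - x) + F (u - a) * Ind (s = U) - (1 - F (l - a)) * Ind (s = L))"
proof (cases "s = U")
  case True
  then have nL: "s \<noteq> L" using o nd by auto
  have ua: "u \<le> a" using True o nd unfolding s_def Sat_def by (auto split: if_splits)
  have psi: "c0 - F (T - x) - m * F (T - x) + F (u - a) * Ind (s = U) - (1 - F (l - a)) * Ind (s = L)
      = F (u - a) - F (u - x)" using True nL by (simp add: c0_def m_def T_def Ind_def)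
  have "\<beta> * \<bar>(u - a) - (u - x)\<bar> \<le> \<bar>F (u - a) - F (u - x)\<bar> \<and> 0 \<le> ((u - a) - (u - x)) * (F (u - a) - F (u - x))"
    by (rule key_ineq[OF der mo]) (rule beta, use ua xC aC in \<open>auto simp: abs_le_iff\<close>)
  then show ?thesis unfolding psi by (simp add: algebra_simps)
next
  case nU: False
  show ?thesis
  proof (cases "s = L")
    case True
    have la: "a \<le> l" using True nU o nd unfolding s_def Sat_def by (auto split: if_splits)
    have psi: "c0 - F (T - x) - m * F (T - x) + F (u - a) * Ind (s = U) - (1 - F (l - a)) * Ind (s = L)
      = F (l - a) - F (l - x)" using True nU by (simp add: c0_def m_def T_def Ind_def)
    have "\<beta> * \<bar>(l - a) - (l - x)\<bar> \<le> \<bar>F (l - a) - F (l - x)\<bar> \<and> 0 \<le> ((l - a) - (l - x)) * (F (l - a) - F (l - x))"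
      by (rule key_ineq[OF der mo]) (rule beta, use la xC aC in \<open>auto simp: abs_le_iff\<close>)
    then show ?thesis unfolding psi by (simp add: algebra_simps)
  next
    case False
    have psi: "c0 - F (T - x) - m * F (T - x) + F (u - a) * Ind (s = U) - (1 - F (l - a)) * Ind (s = L)
      = 2 * (F 0 - F (a - x))" using False nU half by (simp add: c0_def m_def T_def Ind_def)
    have k: "\<beta> * \<bar>0 - (a - x)\<bar> \<le> \<bar>F 0 - F (a - x)\<bar> \<and> 0 \<le> (0 - (a - x)) * (F 0 - F (a - x))"
      by (rule key_ineq[OF der mo]) (rule beta, use xC aC in \<open>auto simp: abs_le_iff\<close>)
    have k1: "\<beta> * \<bar>x - a\<bar> \<le> \<bar>F 0 - F (a - x)\<bar>" using k by (simp add: abs_minus_commute)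
    have k2: "\<bar>F 0 - F (a - x)\<bar> \<le> \<bar>2 * (F 0 - F (a - x))\<bar>" by (simp add: abs_mult)
    have "\<beta> * \<bar>x - a\<bar> \<le> \<bar>2 * (F 0 - F (a - x))\<bar>" using k1 k2 by linarith
    moreover have "0 \<le> (x - a) * (2 * (F 0 - F (a - x)))" using k by (simp add: algebra_simps)
    ultimately show ?thesis unfolding psi by simp
  qed
qed




context cdfloc begin
lemma CE_comb:
  assumes [measurable]: "c0 \<in> borel_measurable G" "p \<in> borel_measurable G" "q \<in> borel_measurable G"
    "t \<in> borel_measurable G"
    and bd: "\<And>\<omega>. \<omega> \<in> space M \<Longrightarrow> \<bar>c0 \<omega>\<bar> \<le> B \<and> \<bar>p \<omega>\<bar> \<le> B \<and> \<bar>q \<omega>\<bar> \<le> B"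
  shows "AE \<omega> in M. real_cond_exp M G (\<lambda>\<omega>. c0 \<omega> - p \<omega> * indicator {\<omega>\<in>space M. e \<omega> \<le> t \<omega>} \<omega>
            - q \<omega> * indicator {\<omega>\<in>space M. e \<omega> < t \<omega>} \<omega>) \<omega>
         = c0 \<omega> - p \<omega> * Fd \<omega> (t \<omega>) - q \<omega> * Fd \<omega> (t \<omega>)"
proof -
  have [measurable]: "c0 \<in> borel_measurable M" "p \<in> borel_measurable M" "q \<in> borel_measurable M"
    "t \<in> borel_measurable M" using GM assms(1-4) by blast+
  define X where "X = (indicator {\<omega>\<in>space M. e \<omega> \<le> t \<omega>} :: 'a \<Rightarrow> real)"
  define Y where "Y = (indicator {\<omega>\<in>space M. e \<omega> < t \<omega>} :: 'a \<Rightarrow> real)"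
  have [measurable]: "X \<in> borel_measurable M" "Y \<in> borel_measurable M" unfolding X_def Y_def by measurable
  have X01: "\<bar>X \<omega>\<bar> \<le> 1" "\<bar>Y \<omega>\<bar> \<le> 1" for \<omega> unfolding X_def Y_def by (auto simp: indicator_def)
  have ic0: "integrable M c0" by (rule bnd_int[where B=B]) (use bd in auto)
  have ipX: "integrable M (\<lambda>\<omega>. p \<omega> * X \<omega>)"
  proof (rule bnd_int[where B=B])
    fix \<omega> assume "\<omega> \<in> space M"
    then have "\<bar>p \<omega>\<bar> \<le> B" using bd by auto
    have "\<bar>p \<omega> * X \<omega>\<bar> = \<bar>p \<omega>\<bar> * \<bar>X \<omega>\<bar>" by (rule abs_mult)
    also have "\<dots> \<le> \<bar>p \<omega>\<bar> * 1" by (rule mult_left_mono[OF X01(1)]) simp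
    finally show "\<bar>p \<omega> * X \<omega>\<bar> \<le> B" using \<open>\<bar>p \<omega>\<bar> \<le> B\<close> by simp
  qed measurable
  have iqY: "integrable M (\<lambda>\<omega>. q \<omega> * Y \<omega>)"
  proof (rule bnd_int[where B=B])
    fix \<omega> assume "\<omega> \<in> space M"
    then have "\<bar>q \<omega>\<bar> \<le> B" using bd by auto
    have "\<bar>q \<omega> * Y \<omega>\<bar> = \<bar>q \<omega>\<bar> * \<bar>Y \<omega>\<bar>" by (rule abs_mult)
    also have "\<dots> \<le> \<bar>q \<omega>\<bar> * 1" by (rule mult_left_mono[OF X01(2)]) simp
    finally show "\<bar>q \<omega> * Y \<omega>\<bar> \<le> B" using \<open>\<bar>q \<omega>\<bar> \<le> B\<close> by simp
  qed measurable
  have i1: "integrable M (\<lambda>\<omega>. c0 \<omega> - p \<omega> * X \<omega>)" using ic0 ipX by auto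
  have A1: "AE \<omega> in M. real_cond_exp M G (\<lambda>\<omega>. (c0 \<omega> - p \<omega> * X \<omega>) - q \<omega> * Y \<omega>) \<omega>
     = real_cond_exp M G (\<lambda>\<omega>. c0 \<omega> - p \<omega> * X \<omega>) \<omega> - real_cond_exp M G (\<lambda>\<omega>. q \<omega> * Y \<omega>) \<omega>"
    by (rule S.real_cond_exp_diff[OF i1 iqY])
  have A2: "AE \<omega> in M. real_cond_exp M G (\<lambda>\<omega>. c0 \<omega> - p \<omega> * X \<omega>) \<omega>
     = real_cond_exp M G c0 \<omega> - real_cond_exp M G (\<lambda>\<omega>. p \<omega> * X \<omega>) \<omega>"
    by (rule S.real_cond_exp_diff[OF ic0 ipX])
  have A3: "AE \<omega> in M. real_cond_exp M G c0 \<omega> = c0 \<omega>"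
    by (rule S.real_cond_exp_F_meas[OF ic0 assms(1)])
  have A4: "AE \<omega> in M. real_cond_exp M G (\<lambda>\<omega>. p \<omega> * X \<omega>) \<omega> = p \<omega> * real_cond_exp M G X \<omega>"
    by (rule S.real_cond_exp_mult) (use ipX in auto)
  have A5: "AE \<omega> in M. real_cond_exp M G (\<lambda>\<omega>. q \<omega> * Y \<omega>) \<omega> = q \<omega> * real_cond_exp M G Y \<omega>"
    by (rule S.real_cond_exp_mult) (use iqY in auto)
  have A6: "AE \<omega> in M. real_cond_exp M G X \<omega> = Fd \<omega> (t \<omega>)" unfolding X_def by (rule CE_le) simp
  have A7: "AE \<omega> in M. real_cond_exp M G Y \<omega> = Fd \<omega> (t \<omega>)" unfolding Y_def by (rule CE_lt) simp
  show ?thesis using A1 A2 A3 A4 A5 A6 A7 unfolding X_def[symmetric] Y_def[symmetric]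
    by eventually_elim simp
qed
end

lemma cdf_01:
  fixes F :: "real \<Rightarrow> real"
  assumes "mono F" "(F \<longlongrightarrow> 0) at_bot" "(F \<longlongrightarrow> 1) at_top"
  shows "0 \<le> F x \<and> F x \<le> 1"
proof
  have "eventually (\<lambda>y. F y \<le> F x) at_bot"
    using eventually_le_at_bot[of x] by eventually_elim (use assms(1) in \<open>simp add: monoD\<close>)
  then show "0 \<le> F x" using tendsto_le[OF trivial_limit_at_bot_linorder tendsto_const assms(2)] by blast
  have "eventually (\<lambda>y. F x \<le> F y) at_top"
    using eventually_ge_at_top[of x] by eventually_elim (use assms(1) in \<open>simp add: monoD\<close>)
  then show "F x \<le> 1" using tendsto_le[OF trivial_limit_at_top_linorder assms(3) tendsto_const] by blast
qed

lemma proj_in: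
  fixes D :: "(real^'n) set"
  assumes "compact D" "D \<noteq> {}"
  shows "proj D Q v \<in> D"
proof -
  have c: "continuous_on D (\<lambda>y. qnorm Q (v - y))"
    unfolding qnorm_def
  proof (intro continuous_intros)
    have "continuous_on UNIV ((*v) Q)" by (rule linear_continuous_on[OF matrix_vector_mul_bounded_linear])
    then show "continuous_on D (\<lambda>x. Q *v (v - x))"
      by (rule continuous_on_compose2) (intro continuous_intros, auto)
  qed
  obtain y where "y \<in> D" "\<forall>z\<in>D. qnorm Q (v - y) \<le> qnorm Q (v - z)"
    using continuous_attains_inf[OF assms c] by blast
  then have "\<exists>y. y \<in> D \<and> (\<forall>z\<in>D. qnorm Q (v - y) \<le> qnorm Q (v - z))" by blast
  then show ?thesis unfolding proj_def by (rule someI2_ex) blast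
qed




theorem lemma8:
  fixes M :: "'a measure"
    and F :: "nat \<Rightarrow> 'a measure"
    and \<phi> :: "nat \<Rightarrow> 'a \<Rightarrow> real^'d"
    and \<theta> :: "real^'d" and D :: "(real^'d) set"
    and Ck :: "nat \<Rightarrow> 'a \<Rightarrow> real"
    and \<epsilon> y :: "nat \<Rightarrow> 'a \<Rightarrow> real"
    and l u L U :: "nat \<Rightarrow> 'a \<Rightarrow> real"
    and Mc Cc :: real
    and b :: "nat \<Rightarrow> 'a \<Rightarrow> real"
    and Fd fd :: "nat \<Rightarrow> 'a \<Rightarrow> real \<Rightarrow> real"
    and thb :: "nat \<Rightarrow> 'a \<Rightarrow> real^'d" and th0 :: "real^'d"
    and Pb :: "nat \<Rightarrow> 'a \<Rightarrow> real^'d^'d" and P0 :: "real^'d^'d"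
    and mub :: "nat \<Rightarrow> 'a \<Rightarrow> real"
  assumes prob: "prob_space M"
    and filt: "filtration (space M) F"
    and subalg: "\<And>k. subalgebra M (F k)"
    \<comment> \<open>model\<close>
    and phi_meas: "\<And>k. \<phi> k \<in> borel_measurable (F k)"
    and eps_meas: "\<And>k. \<epsilon> (Suc k) \<in> borel_measurable (F (Suc k))"
    and model: "\<And>k \<omega>. \<omega> \<in> space M \<Longrightarrow>
       y (Suc k) \<omega> = Sat (L k \<omega>) (l k \<omega>) (u k \<omega>) (U k \<omega>) (\<phi> k \<omega> \<bullet> \<theta> + \<epsilon> (Suc k) \<omega>)"
    \<comment> \<open>A1\<close>
    and phi_bdd: "\<exists>B. \<forall>k. \<forall>\<omega>\<in>space M. norm (\<phi> k \<omega>) \<le> B"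
    and D_convex: "convex D" and D_compact: "compact D"
    and theta_int: "\<theta> \<in> interior D"
    and Ck_meas: "\<And>k. Ck k \<in> borel_measurable (F k)"
    and Ck_bdd: "\<exists>B. \<forall>k. \<forall>\<omega>\<in>space M. \<bar>Ck k \<omega>\<bar> \<le> B"
    and Ck_sup: "\<And>k \<omega> x. \<omega> \<in> space M \<Longrightarrow> x \<in> D \<Longrightarrow> \<bar>\<phi> k \<omega> \<bullet> x\<bar> \<le> Ck k \<omega>"
    \<comment> \<open>A2\<close>
    and l_meas: "\<And>k. l k \<in> borel_measurable (F k)"
    and u_meas: "\<And>k. u k \<in> borel_measurable (F k)"
    and L_meas: "\<And>k. L k \<in> borel_measurable (F k)"
    and U_meas: "\<And>k. U k \<in> borel_measurable (F k)"
    and order: "AE \<omega> in M. \<forall>k. L k \<omega> \<le> l k \<omega> \<and> l k \<omega> \<le> u k \<omega> \<and> u k \<omega> \<le> U k \<omega>"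
    and Mc_bound: "AE \<omega> in M. \<forall>k. max (l k \<omega>) (- u k \<omega>) \<le> Mc"
    and nondegen: "\<And>k. AE \<omega> in M. \<not> (L k \<omega> = l k \<omega> \<and> l k \<omega> = u k \<omega> \<and> u k \<omega> = U k \<omega>)"
    and b_meas: "\<And>k. b k \<in> borel_measurable (F k)"
    and b_bdd: "\<exists>c>0. \<forall>k. \<forall>\<omega>\<in>space M. c \<le> b k \<omega> \<and> b k \<omega> \<le> 1"
    \<comment> \<open>A3: F_{k+1} is the conditional distribution function of eps_{k+1} given F_k,
        with continuous density f_{k+1}\<close>
    and Fd_meas: "\<And>k x. (\<lambda>\<omega>. Fd (Suc k) \<omega> x) \<in> borel_measurable (F k)"
    and Fd_cond: "\<And>k x. AE \<omega> in M. Fd (Suc k) \<omega> x =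
       real_cond_exp M (F k) (indicator {\<omega>' \<in> space M. \<epsilon> (Suc k) \<omega>' \<le> x}) \<omega>"
    and Fd_mono: "\<And>k \<omega>. \<omega> \<in> space M \<Longrightarrow> mono (Fd (Suc k) \<omega>)"
    and Fd_bot: "\<And>k \<omega>. \<omega> \<in> space M \<Longrightarrow> (Fd (Suc k) \<omega> \<longlongrightarrow> 0) at_bot"
    and Fd_top: "\<And>k \<omega>. \<omega> \<in> space M \<Longrightarrow> (Fd (Suc k) \<omega> \<longlongrightarrow> 1) at_top"
    and Fd_deriv: "\<And>k \<omega> x. \<omega> \<in> space M \<Longrightarrow>
       (Fd (Suc k) \<omega> has_real_derivative fd (Suc k) \<omega> x) (at x)"
    and fd_cont: "\<And>k \<omega>. \<omega> \<in> space M \<Longrightarrow> continuous_on UNIV (fd (Suc k) \<omega>)"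
    and Fd_half: "\<And>k \<omega>. \<omega> \<in> space M \<Longrightarrow> Fd (Suc k) \<omega> 0 = 1 / 2"
    and Cc_ge: "AE \<omega> in M. \<forall>k. Ck k \<omega> \<le> Cc"
    and dens_bdd: "\<exists>c>0. \<exists>c'. AE \<omega> in M. \<forall>k x. \<bar>x\<bar> \<le> max (2 * Cc) (Cc + Mc) \<longrightarrow>
       c \<le> fd (Suc k) \<omega> x \<and> fd (Suc k) \<omega> x \<le> c'"
    \<comment> \<open>TSWLAD Step 1\<close>
    and th0_D: "th0 \<in> D" and P0_pd: "pos_def P0"
    and thb0: "\<And>\<omega>. \<omega> \<in> space M \<Longrightarrow> thb 0 \<omega> = th0"
    and Pb0: "\<And>\<omega>. \<omega> \<in> space M \<Longrightarrow> Pb 0 \<omega> = P0"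
    and mub_meas: "\<And>k. mub k \<in> borel_measurable (F k)"
    and mub_bdd: "\<exists>c>0. \<exists>c'. \<forall>k. \<forall>\<omega>\<in>space M. c \<le> mub k \<omega> \<and> mub k \<omega> \<le> c'"
    and Pb_rec: "\<And>k \<omega>. \<omega> \<in> space M \<Longrightarrow>
       Pb (Suc k) \<omega> = Pb k \<omega> -
         ((1 / (mub k \<omega> + betabar (fd (Suc k) \<omega>) (Ck k \<omega>) (l k \<omega>) (u k \<omega>) * (b k \<omega>)\<^sup>2
                 * (\<phi> k \<omega> \<bullet> (Pb k \<omega> *v \<phi> k \<omega>))))
          * betabar (fd (Suc k) \<omega>) (Ck k \<omega>) (l k \<omega>) (u k \<omega>) * (b k \<omega>)\<^sup>2)
         *\<^sub>R (Pb k \<omega> ** outer (\<phi> k \<omega>) (\<phi> k \<omega>) ** Pb k \<omega>)"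
    and thb_rec: "\<And>k \<omega>. \<omega> \<in> space M \<Longrightarrow>
       thb (Suc k) \<omega> = proj D (matrix_inv (Pb (Suc k) \<omega>))
         (thb k \<omega> +
          ((1 / (mub k \<omega> + betabar (fd (Suc k) \<omega>) (Ck k \<omega>) (l k \<omega>) (u k \<omega>) * (b k \<omega>)\<^sup>2
                 * (\<phi> k \<omega> \<bullet> (Pb k \<omega> *v \<phi> k \<omega>)))) * b k \<omega>
           * (sgn (y (Suc k) \<omega> - Sat (L k \<omega>) (l k \<omega>) (u k \<omega>) (U k \<omega>) (\<phi> k \<omega> \<bullet> thb k \<omega>))
              + Fd (Suc k) \<omega> (u k \<omega> - \<phi> k \<omega> \<bullet> thb k \<omega>)
                * Ind (Sat (L k \<omega>) (l k \<omega>) (u k \<omega>) (U k \<omega>) (\<phi> k \<omega> \<bullet> thb k \<omega>) = U k \<omega>)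
              - (1 - Fd (Suc k) \<omega> (l k \<omega> - \<phi> k \<omega> \<bullet> thb k \<omega>))
                * Ind (Sat (L k \<omega>) (l k \<omega>) (u k \<omega>) (U k \<omega>) (\<phi> k \<omega> \<bullet> thb k \<omega>) = L k \<omega>)))
          *\<^sub>R (Pb k \<omega> *v \<phi> k \<omega>))"
    and thb_meas: "\<And>k. thb k \<in> borel_measurable (F k)"
  shows "\<forall>k. AE \<omega> in M.
     (let a = \<phi> k \<omega> \<bullet> thb k \<omega>;
          S = Sat (L k \<omega>) (l k \<omega>) (u k \<omega>) (U k \<omega>);
          e = \<phi> k \<omega> \<bullet> (\<theta> - thb k \<omega>);
          psi = real_cond_exp M (F k)
                  (\<lambda>\<omega>'. sgn (y (Suc k) \<omega>' - Sat (L k \<omega>') (l k \<omega>') (u k \<omega>') (U k \<omega>')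
                                              (\<phi> k \<omega>' \<bullet> thb k \<omega>'))) \<omega>
                + Fd (Suc k) \<omega> (u k \<omega> - a) * Ind (S a = U k \<omega>)
                - (1 - Fd (Suc k) \<omega> (l k \<omega> - a)) * Ind (S a = L k \<omega>)
      in betabar (fd (Suc k) \<omega>) (Ck k \<omega>) (l k \<omega>) (u k \<omega>) * \<bar>e\<bar> \<le> \<bar>psi\<bar> \<and> e * psi \<ge> 0)"
proof
  fix k
  interpret P: prob_space M by (rule prob)
  interpret SF: sigma_finite_subalgebra M "F k"
    by (rule finite_measure_subalgebra_is_sigma_finite)
       (simp add: finite_measure_subalgebra_def finite_measure_subalgebra_axioms_def subalg P.finite_measure_axioms)
  have epsM[measurable]: "\<epsilon> (Suc k) \<in> borel_measurable M"
    using measurable_from_subalg[OF subalg[of "Suc k"] eps_meas[of k]] .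
  have FG: "f \<in> borel_measurable (F k) \<Longrightarrow> f \<in> borel_measurable M" for f :: "'a \<Rightarrow> real"
    using measurable_from_subalg[OF subalg[of k]] by blast
  have spk: "space (F k) = space M" using subalg[of k] by (simp add: subalgebra_def)
  interpret C: cdfloc M "F k" "\<epsilon> (Suc k)" "Fd (Suc k)"
  proof (intro cdfloc.intro cdfloc_axioms.intro prob subalg epsM Fd_meas Fd_cond)
    fix \<omega> x assume "\<omega> \<in> space M"
    show "isCont (Fd (Suc k) \<omega>) x" by (rule DERIV_isCont[OF Fd_deriv[OF \<open>\<omega> \<in> space M\<close>]])
    show "0 \<le> Fd (Suc k) \<omega> x \<and> Fd (Suc k) \<omega> x \<le> 1"
      by (rule cdf_01[OF Fd_mono Fd_bot Fd_top]) (use \<open>\<omega> \<in> space M\<close> in auto)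
  qed
  have [measurable]: "\<phi> k \<in> borel_measurable (F k)" "thb k \<in> borel_measurable (F k)"
    "l k \<in> borel_measurable (F k)" "u k \<in> borel_measurable (F k)"
    "L k \<in> borel_measurable (F k)" "U k \<in> borel_measurable (F k)"
    by (rule phi_meas thb_meas l_meas u_meas L_meas U_meas)+
  define xx where "xx \<omega> = \<phi> k \<omega> \<bullet> \<theta>" for \<omega>
  define a where "a \<omega> = \<phi> k \<omega> \<bullet> thb k \<omega>" for \<omega>
  define s where "s \<omega> = Sat (L k \<omega>) (l k \<omega>) (u k \<omega>) (U k \<omega>) (a \<omega>)" for \<omega>
  define T where "T \<omega> = (if s \<omega> = U k \<omega> then u k \<omega> else if s \<omega> = L k \<omega> then l k \<omega> else a \<omega>)" for \<omega>
  define c0 where "c0 \<omega> = (if s \<omega> = U k \<omega> then 0 else 1 :: real)" for \<omega>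
  define m where "m \<omega> = (if s \<omega> \<noteq> U k \<omega> \<and> s \<omega> \<noteq> L k \<omega> then 1 else 0 :: real)" for \<omega>
  define t where "t \<omega> = T \<omega> - xx \<omega>" for \<omega>
  have xxG[measurable]: "xx \<in> borel_measurable (F k)" unfolding xx_def by measurable
  have aG[measurable]: "a \<in> borel_measurable (F k)" unfolding a_def by measurable
  have sG[measurable]: "s \<in> borel_measurable (F k)" unfolding s_def Sat_def by measurable
  have TG[measurable]: "T \<in> borel_measurable (F k)" unfolding T_def by measurable
  have c0G[measurable]: "c0 \<in> borel_measurable (F k)" unfolding c0_def by measurable
  have mG[measurable]: "m \<in> borel_measurable (F k)" unfolding m_def by measurable
  have tG[measurable]: "t \<in> borel_measurable (F k)" unfolding t_def by measurable
  define X where "X = (indicator {\<omega>\<in>space M. \<epsilon> (Suc k) \<omega> \<le> t \<omega>} :: 'a \<Rightarrow> real)"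
  define Y where "Y = (indicator {\<omega>\<in>space M. \<epsilon> (Suc k) \<omega> < t \<omega>} :: 'a \<Rightarrow> real)"
  define fs where "fs = (\<lambda>\<omega>'. sgn (y (Suc k) \<omega>' - Sat (L k \<omega>') (l k \<omega>') (u k \<omega>') (U k \<omega>')
                                              (\<phi> k \<omega>' \<bullet> thb k \<omega>')))"
  have bd01: "\<bar>c0 \<omega>\<bar> \<le> 1 \<and> \<bar>(\<lambda>_. 1::real) \<omega>\<bar> \<le> 1 \<and> \<bar>m \<omega>\<bar> \<le> 1"
     "\<bar>c0 \<omega>\<bar> \<le> 1 \<and> \<bar>m \<omega>\<bar> \<le> 1 \<and> \<bar>(\<lambda>_. 1::real) \<omega>\<bar> \<le> 1" for \<omega>
    by (auto simp: c0_def m_def)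
  have CEl: "AE \<omega> in M. real_cond_exp M (F k) (\<lambda>\<omega>. c0 \<omega> - 1 * X \<omega> - m \<omega> * Y \<omega>) \<omega>
      = c0 \<omega> - 1 * Fd (Suc k) \<omega> (t \<omega>) - m \<omega> * Fd (Suc k) \<omega> (t \<omega>)"
    unfolding X_def Y_def by (rule C.CE_comb[of c0 "\<lambda>_. 1" m t 1]) (use bd01 in auto)
  have CEu: "AE \<omega> in M. real_cond_exp M (F k) (\<lambda>\<omega>. c0 \<omega> - m \<omega> * X \<omega> - 1 * Y \<omega>) \<omega>
      = c0 \<omega> - m \<omega> * Fd (Suc k) \<omega> (t \<omega>) - 1 * Fd (Suc k) \<omega> (t \<omega>)"
    unfolding X_def Y_def by (rule C.CE_comb[of c0 m "\<lambda>_. 1" t 1]) (use bd01 in auto)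
  have [measurable]: "X \<in> borel_measurable M" "Y \<in> borel_measurable M"
    unfolding X_def Y_def using FG[OF tG] by measurable
  have [measurable]: "c0 \<in> borel_measurable M" "m \<in> borel_measurable M"
    "xx \<in> borel_measurable M" "l k \<in> borel_measurable M" "u k \<in> borel_measurable M"
    "L k \<in> borel_measurable M" "U k \<in> borel_measurable M" "s \<in> borel_measurable M"
    using FG by (simp_all add: FG)
  have fs_eq: "fs \<omega> = sgn (Sat (L k \<omega>) (l k \<omega>) (u k \<omega>) (U k \<omega>) (xx \<omega> + \<epsilon> (Suc k) \<omega>) - s \<omega>)"
    if "\<omega> \<in> space M" for \<omega>
    using model[OF that, of k] by (simp add: fs_def s_def a_def xx_def)
  have fsM: "fs \<in> borel_measurable M"
  proof -
    have "(\<lambda>\<omega>. sgn (Sat (L k \<omega>) (l k \<omega>) (u k \<omega>) (U k \<omega>) (xx \<omega> + \<epsilon> (Suc k) \<omega>) - s \<omega>)) \<in> borel_measurable M"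
      unfolding Sat_def by measurable
    then show ?thesis by (rule measurable_cong[THEN iffD1, rotated]) (simp add: fs_eq)
  qed
  have ifs: "integrable M fs"
    by (rule C.bnd_int[where B=1, OF fsM]) (simp add: fs_def sgn_if)
  have ilow: "integrable M (\<lambda>\<omega>. c0 \<omega> - 1 * X \<omega> - m \<omega> * Y \<omega>)"
    by (rule C.bnd_int[where B=2], measurable) (auto simp: c0_def m_def X_def Y_def indicator_def)
  have iupp: "integrable M (\<lambda>\<omega>. c0 \<omega> - m \<omega> * X \<omega> - 1 * Y \<omega>)"
    by (rule C.bnd_int[where B=2], measurable) (auto simp: c0_def m_def X_def Y_def indicator_def)
  have bounds: "AE \<omega> in M. (c0 \<omega> - 1 * X \<omega> - m \<omega> * Y \<omega>) \<le> fs \<omega> \<and> fs \<omega> \<le> (c0 \<omega> - m \<omega> * X \<omega> - 1 * Y \<omega>)"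
    using order nondegen[of k] AE_space
  proof eventually_elim
    case (elim \<omega>)
    have o: "L k \<omega> \<le> l k \<omega>" "l k \<omega> \<le> u k \<omega>" "u k \<omega> \<le> U k \<omega>" using elim(1) by auto
    note sb = sat_bounds[OF o elim(2), of "a \<omega>" "xx \<omega> + \<epsilon> (Suc k) \<omega>"]
    have ix: "X \<omega> = (if xx \<omega> + \<epsilon> (Suc k) \<omega> \<le> T \<omega> then 1 else 0)"
      "Y \<omega> = (if xx \<omega> + \<epsilon> (Suc k) \<omega> < T \<omega> then 1 else 0)"
      using elim(3) by (auto simp: X_def Y_def t_def indicator_def)
    show ?case unfolding fs_eq[OF elim(3)] ix mult_1_left c0_def m_def T_def s_def by (rule sb)
  qed
  have m1: "AE \<omega> in M. real_cond_exp M (F k) (\<lambda>\<omega>. c0 \<omega> - 1 * X \<omega> - m \<omega> * Y \<omega>) \<omega> \<le> real_cond_exp M (F k) fs \<omega>"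
    by (rule SF.real_cond_exp_mono[OF _ ilow ifs]) (use bounds in \<open>auto elim: eventually_mono\<close>)
  have m2: "AE \<omega> in M. real_cond_exp M (F k) fs \<omega> \<le> real_cond_exp M (F k) (\<lambda>\<omega>. c0 \<omega> - m \<omega> * X \<omega> - 1 * Y \<omega>) \<omega>"
    by (rule SF.real_cond_exp_mono[OF _ ifs iupp]) (use bounds in \<open>auto elim: eventually_mono\<close>)
  have CEf: "AE \<omega> in M. real_cond_exp M (F k) fs \<omega> = c0 \<omega> - Fd (Suc k) \<omega> (t \<omega>) - m \<omega> * Fd (Suc k) \<omega> (t \<omega>)"
    using m1 m2 CEl CEu by eventually_elim simp
  have thD: "\<theta> \<in> D" using theta_int interior_subset by blast
  have Dne: "D \<noteq> {}" using thD by auto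
  have thbD: "thb k \<omega> \<in> D" if "\<omega> \<in> space M" for \<omega>
  proof (cases k)
    case 0 then show ?thesis using thb0[OF that] th0_D by simp
  next
    case (Suc j) then show ?thesis using thb_rec[OF that, of j] by (simp add: proj_in[OF D_compact Dne])
  qed
  show "AE \<omega> in M.
     (let a = \<phi> k \<omega> \<bullet> thb k \<omega>;
          S = Sat (L k \<omega>) (l k \<omega>) (u k \<omega>) (U k \<omega>);
          e = \<phi> k \<omega> \<bullet> (\<theta> - thb k \<omega>);
          psi = real_cond_exp M (F k)
                  (\<lambda>\<omega>'. sgn (y (Suc k) \<omega>' - Sat (L k \<omega>') (l k \<omega>') (u k \<omega>') (U k \<omega>')
                                              (\<phi> k \<omega>' \<bullet> thb k \<omega>'))) \<omega>
                + Fd (Suc k) \<omega> (u k \<omega> - a) * Ind (S a = U k \<omega>)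
                - (1 - Fd (Suc k) \<omega> (l k \<omega> - a)) * Ind (S a = L k \<omega>)
      in betabar (fd (Suc k) \<omega>) (Ck k \<omega>) (l k \<omega>) (u k \<omega>) * \<bar>e\<bar> \<le> \<bar>psi\<bar> \<and> e * psi \<ge> 0)"
    using CEf order nondegen[of k] AE_space
  proof eventually_elim
    case (elim \<omega>)
    have o: "L k \<omega> \<le> l k \<omega>" "l k \<omega> \<le> u k \<omega>" "u k \<omega> \<le> U k \<omega>" using elim(2) by auto
    have fd0: "0 \<le> fd (Suc k) \<omega> z" for z
      by (rule deriv_mono_nonneg[OF Fd_mono[OF elim(4)] Fd_deriv[OF elim(4)]])
    have beta: "betabar (fd (Suc k) \<omega>) (Ck k \<omega>) (l k \<omega>) (u k \<omega>) \<le> fd (Suc k) \<omega> z"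
      if "\<bar>z\<bar> \<le> max (2 * Ck k \<omega>) (max (Ck k \<omega> + l k \<omega>) (Ck k \<omega> - u k \<omega>))" for z
      by (rule betabar_le[OF fd0 that])
    have xC: "\<bar>xx \<omega>\<bar> \<le> Ck k \<omega>" using Ck_sup[OF elim(4) thD] by (simp add: xx_def)
    have aC: "\<bar>a \<omega>\<bar> \<le> Ck k \<omega>" using Ck_sup[OF elim(4) thbD[OF elim(4)]] by (simp add: a_def)
    note fp = final_pw[OF o elim(3) Fd_deriv[OF elim(4)] Fd_mono[OF elim(4)] Fd_half[OF elim(4)] beta xC aC]
    have e_eq: "\<phi> k \<omega> \<bullet> (\<theta> - thb k \<omega>) = xx \<omega> - a \<omega>" by (simp add: xx_def a_def inner_diff_right)
    have ce: "real_cond_exp M (F k)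
                  (\<lambda>\<omega>'. sgn (y (Suc k) \<omega>' - Sat (L k \<omega>') (l k \<omega>') (u k \<omega>') (U k \<omega>')
                                              (a \<omega>'))) \<omega>
       = c0 \<omega> - Fd (Suc k) \<omega> (t \<omega>) - m \<omega> * Fd (Suc k) \<omega> (t \<omega>)"
      using elim(1) unfolding fs_def a_def .
    show ?case unfolding Let_def e_eq a_def[symmetric] ce
      unfolding c0_def m_def t_def T_def s_def by (rule fp)
  qed
qed


end
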